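(* Let $(Z_n)_{n\ge0}$ be a linear fractional Galton–Watson process in i.i.d. random environment (as in the context) which is subcritical, i.e. $R^{(-1)}_\infty<\infty=R_\infty$ a.s., and let $l\in\mathbb{N}$. Put $c_l:=\Pi_l(1+R^{(-1)}_l)$, $R^{(-1)}_{l,\infty}:=\Pi_l(R^{(-1)}_\infty-R^{(-1)}_l)=\sum_{k\ge1}\frac{\Pi_l}{\Pi_{k+l}}B_{k+l}$ and $$\vartheta_l:=\frac{1}{c_l}+\Big(1-\frac{1}{c_l}\Big)\frac{1}{1+R^{(-1)}_{l,\infty}}.$$ Then, as $n\to\infty$, $$\big\|\mathbf{P}^{(n+l:1)}(Z_n\in\cdot\mid Z_n>0,Z_{n+l}=0)-\mathrm{Geom}_+(\vartheta_l)\big\|\to0\quad\text{a.s.},$$ $$\mathbf{E}^{(n+l:1)}(Z_n\mid Z_n>0,Z_{n+l}=0)\to\vartheta_l^{-1}\quad\text{a.s.},$$ and $$\frac{\Pi_{n+l}}{\Pi_l}\,\mathbf{P}^{(n+l:1)}(Z_n>0,Z_{n+l}=0)\ \to\ \frac{1-c_l^{-1}}{1+R^{(-1)}_{l,\infty}c_l^{-1}}\cdot\frac{1}{1+R^{(-1)}_{l,\infty}}\quad\text{a.s.}$$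
   Context: Let $(A_n,B_n)_{n\ge1}$ be i.i.d. copies of $(A,B)$ with $\mathbb{P}(A>0,B>0,A+B\ge1)=1$; $e_n=(A_n,B_n)$. For $a,b>0$, $a+b\ge1$, $LF(a,b)$ is the distribution on $\mathbb{N}_0$ whose generating function $f$ satisfies $1/(1-f(s))=a/(1-s)+b$, $s\in[0,1)$. $\mathrm{Geom}_+(p)$ is the geometric law on $\{1,2,\dots\}$ with weights $p(1-p)^{k-1}$. $(Z_n)$, $Z_0=1$, is a Galton–Watson process in random environment: individuals reproduce independently with linear fractional offspring laws determined by the environment. $\Pi_0=1$, $\Pi_n=\prod_{k=1}^nA_k$, $R_n=\sum_{k=1}^n\Pi_{k-1}B_k$, $R_\infty=\lim R_n$, $R^{(-1)}_n=\sum_{k=1}^n\Pi_k^{-1}B_k$, $R^{(-1)}_\infty=\lim R^{(-1)}_n$. For $N\in\mathbb{N}$, $\mathbf{P}^{(N:1)},\mathbf{E}^{(N:1)}$ denote quenched probability/expectation for the process in the reversed environment: given $(e_1,\dots,e_N)$, each individual of generation $k-1$ ($1\le k\le N$) independently has offspring law $LF(A_{N-k+1},B_{N-k+1})$. $\|\cdot\|$ is total variation. *)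

theory Defs
  imports "HOL-Probability.Probability"
begin

definition LF :: "real \<Rightarrow> real \<Rightarrow> nat pmf" where
  "LF a b = (THE p. \<forall>s\<in>{0..<1::real}.
      1 / (1 - (\<Sum>k. pmf p k * s ^ k)) = a / (1 - s) + b)"

definition Geom_plus :: "real \<Rightarrow> nat pmf" where
  "Geom_plus p = map_pmf Suc (geometric_pmf p)"

definition tv_dist :: "nat pmf \<Rightarrow> nat pmf \<Rightarrow> real" where
  "tv_dist p q = (SUP S. \<bar>measure_pmf.prob p S - measure_pmf.prob q S\<bar>)"

fun conv_pow :: "nat pmf \<Rightarrow> nat \<Rightarrow> nat pmf" where
  "conv_pow q 0 = return_pmf 0"
| "conv_pow q (Suc m) = bind_pmf q (\<lambda>x. map_pmf ((+) x) (conv_pow q m))"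

(* Quenched law of the trajectory [Z_0, ..., Z_n] of a Galton-Watson process
   in varying environment, Z_0 = 1, where each individual of generation k-1
   (1 <= k <= n) has offspring law  env k, independently. *)
fun gw_traj :: "(nat \<Rightarrow> nat pmf) \<Rightarrow> nat \<Rightarrow> nat list pmf" where
  "gw_traj env 0 = return_pmf [1]"
| "gw_traj env (Suc n) =
     bind_pmf (gw_traj env n) (\<lambda>zs. map_pmf (\<lambda>z. zs @ [z]) (conv_pow (env (Suc n)) (last zs)))"

definition rev_env :: "(nat \<Rightarrow> 'a \<Rightarrow> real) \<Rightarrow> (nat \<Rightarrow> 'a \<Rightarrow> real) \<Rightarrow> nat \<Rightarrow> 'a \<Rightarrow> nat \<Rightarrow> nat pmf" where
  "rev_env A B N \<omega> k = LF (A (N - k + 1) \<omega>) (B (N - k + 1) \<omega>)"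

definition Pq :: "(nat \<Rightarrow> 'a \<Rightarrow> real) \<Rightarrow> (nat \<Rightarrow> 'a \<Rightarrow> real) \<Rightarrow> nat \<Rightarrow> 'a \<Rightarrow> nat list pmf" where
  "Pq A B N \<omega> = gw_traj (rev_env A B N \<omega>) N"

definition Pi_env :: "(nat \<Rightarrow> 'a \<Rightarrow> real) \<Rightarrow> nat \<Rightarrow> 'a \<Rightarrow> real" where
  "Pi_env A n \<omega> = (\<Prod>k=1..n. A k \<omega>)"

definition R_env :: "(nat \<Rightarrow> 'a \<Rightarrow> real) \<Rightarrow> (nat \<Rightarrow> 'a \<Rightarrow> real) \<Rightarrow> nat \<Rightarrow> 'a \<Rightarrow> real" where
  "R_env A B n \<omega> = (\<Sum>k=1..n. Pi_env A (k - 1) \<omega> * B k \<omega>)"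

definition Rm1_env :: "(nat \<Rightarrow> 'a \<Rightarrow> real) \<Rightarrow> (nat \<Rightarrow> 'a \<Rightarrow> real) \<Rightarrow> nat \<Rightarrow> 'a \<Rightarrow> real" where
  "Rm1_env A B n \<omega> = (\<Sum>k=1..n. B k \<omega> / Pi_env A k \<omega>)"

definition Rm1_inf :: "(nat \<Rightarrow> 'a \<Rightarrow> real) \<Rightarrow> (nat \<Rightarrow> 'a \<Rightarrow> real) \<Rightarrow> 'a \<Rightarrow> real" where
  "Rm1_inf A B \<omega> = lim (\<lambda>n. Rm1_env A B n \<omega>)"

definition c_env :: "(nat \<Rightarrow> 'a \<Rightarrow> real) \<Rightarrow> (nat \<Rightarrow> 'a \<Rightarrow> real) \<Rightarrow> nat \<Rightarrow> 'a \<Rightarrow> real" where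
  "c_env A B l \<omega> = Pi_env A l \<omega> * (1 + Rm1_env A B l \<omega>)"

definition Rm1_tail :: "(nat \<Rightarrow> 'a \<Rightarrow> real) \<Rightarrow> (nat \<Rightarrow> 'a \<Rightarrow> real) \<Rightarrow> nat \<Rightarrow> 'a \<Rightarrow> real" where
  "Rm1_tail A B l \<omega> = Pi_env A l \<omega> * (Rm1_inf A B \<omega> - Rm1_env A B l \<omega>)"

definition theta_env :: "(nat \<Rightarrow> 'a \<Rightarrow> real) \<Rightarrow> (nat \<Rightarrow> 'a \<Rightarrow> real) \<Rightarrow> nat \<Rightarrow> 'a \<Rightarrow> real" where
  "theta_env A B l \<omega> = 1 / c_env A B l \<omega>
      + (1 - 1 / c_env A B l \<omega>) * (1 / (1 + Rm1_tail A B l \<omega>))"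

end

theory Submission
  imports Defs
begin


lemma expectation_bind_pmf_bounded:
  fixes g :: "'b \<Rightarrow> real"
  assumes "\<And>x. \<bar>g x\<bar> \<le> B"
  shows "measure_pmf.expectation (bind_pmf M N) g = measure_pmf.expectation M (\<lambda>x. measure_pmf.expectation (N x) g)"
  unfolding measure_pmf_bind
  apply (rule integral_bind[where K="count_space UNIV" and B=B and B'=1])
  using assms measurable_measure_pmf[of N] 
  by (auto simp: measure_pmf.finite_measure measure_pmf.emeasure_space_1)

lemma integrable_pow_pmf:
  fixes p :: "nat pmf" and s :: real
  assumes "0 \<le> s" "s \<le> 1"
  shows "integrable p (\<lambda>k. s^k)"
proof (rule measure_pmf.integrable_const_bound[where B=1])
  show "AE x in measure_pmf p. norm (s ^ x) \<le> 1"
    using assms by (simp add: power_le_one)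
qed simp

lemma count_integrable_pow:
  fixes p :: "nat pmf" and s :: real
  assumes "0 \<le> s" "s \<le> 1"
  shows "integrable (count_space UNIV) (\<lambda>k. pmf p k * s^k)"
proof -
  have int: "integrable p (\<lambda>k. s^k)" using integrable_pow_pmf assms .
  show ?thesis
    using int unfolding measure_pmf_eq_density by (subst (asm) integrable_density) auto
qed

lemma gf_expect:
  fixes p :: "nat pmf" and s :: real
  assumes "0 \<le> s" "s \<le> 1"
  shows "measure_pmf.expectation p (\<lambda>k. s^k) = (\<Sum>k. pmf p k * s^k)"
proof -
  have int: "integrable p (\<lambda>k. s^k)" using integrable_pow_pmf assms .
  have "measure_pmf.expectation p (\<lambda>k. s^k) = (\<integral>k. pmf p k * s^k \<partial>count_space UNIV)"
    unfolding measure_pmf_eq_density by (subst integral_density) auto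
  also have "integrable (count_space UNIV) (\<lambda>k. pmf p k * s^k)"
    using int unfolding measure_pmf_eq_density by (subst (asm) integrable_density) auto
  hence "(\<integral>k. pmf p k * s^k \<partial>count_space UNIV) = (\<Sum>k. pmf p k * s^k)"
    by (subst integral_count_space_nat) auto
  finally show ?thesis .
qed



lemma pmf_summable_gf:
  fixes p :: "nat pmf" and s :: real
  assumes "0 \<le> s" "s \<le> 1"
  shows "summable (\<lambda>k. pmf p k * s^k)"
proof -
  have "integrable (count_space UNIV) (\<lambda>k. pmf p k * s^k)"
    by (rule count_integrable_pow[OF assms])
  then have "summable (\<lambda>k. norm (pmf p k * s^k))" by (subst (asm) integrable_count_space_nat_iff)
  then show ?thesis by (rule summable_norm_cancel)
qed

lemma powser_unique_zero:
  fixes d :: "nat \<Rightarrow> real"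
  assumes sm: "summable d"
    and z: "\<And>s. 0 < s \<Longrightarrow> s < 1 \<Longrightarrow> (\<Sum>k. d k * s^k) = 0"
  shows "d m = 0"
proof (induction m rule: less_induct)
  case (less m)
  define e where "e k = d (k + m)" for k
  have sme: "summable (\<lambda>k. e k * 1^k)" unfolding e_def using summable_ignore_initial_segment[OF sm, of m] by simp
  have ez: "(\<Sum>k. e k * s^k) = 0" if s: "0 < s" "s < 1" for s
  proof -
    have sd: "summable (\<lambda>k. d k * s^k)"
      using powser_inside[of d 1 s] sm s by simp
    have "(\<Sum>k. d k * s^k) = (\<Sum>k. d (k+m) * s^(k+m)) + (\<Sum>i<m. d i * s^i)"
      by (rule suminf_split_initial_segment[OF sd])
    also have "(\<Sum>i<m. d i * s^i) = 0" using less by simp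
    also have "(\<Sum>k. d (k+m) * s^(k+m)) = (\<Sum>k. e k * s^k) * s^m"
    proof -
      have "summable (\<lambda>k. e k * s^k)" using powser_inside[of e 1 s] sme s by simp
      then have "(\<lambda>k. e k * s^k * s^m) sums ((\<Sum>k. e k * s^k) * s^m)"
        by (intro sums_mult2) (simp add: summable_sums)
      then show ?thesis unfolding e_def by (simp add: power_add mult_ac sums_iff)
    qed
    finally show ?thesis using z[OF s] s by simp
  qed
  have cont: "isCont (\<lambda>x. \<Sum>k. e k * x^k) 0"
    by (rule isCont_powser[OF sme]) simp
  have lim: "(\<lambda>n. inverse (real (Suc n)) / 2) \<longlonglongrightarrow> 0"
    using tendsto_divide[OF LIMSEQ_inverse_real_of_nat tendsto_const, of 2] by simp
  have "(\<lambda>n. \<Sum>k. e k * (inverse (real (Suc n)) / 2)^k) \<longlonglongrightarrow> (\<Sum>k. e k * 0^k)"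
    using isCont_tendsto_compose[OF cont lim] .
  moreover have "(\<lambda>n. \<Sum>k. e k * (inverse (real (Suc n)) / 2)^k) = (\<lambda>n. 0)"
  proof (rule ext)
    fix n :: nat
    have "0 < inverse (real (Suc n)) / 2" by simp
    moreover have "inverse (real (Suc n)) \<le> 1" by (simp add: inverse_le_1_iff)
    then have "inverse (real (Suc n)) / 2 < 1" by simp
    ultimately show "(\<Sum>k. e k * (inverse (real (Suc n)) / 2)^k) = 0" by (rule ez)
  qed
  ultimately have "(\<lambda>n. 0::real) \<longlonglongrightarrow> (\<Sum>k. e k * 0^k)" by simp
  then have "(\<Sum>k. e k * 0^k) = 0" using LIMSEQ_unique[OF _ tendsto_const] by metis
  then have "e 0 = 0" by simp
  then show ?case unfolding e_def by simp
qed

lemma pmf_eq_from_gf: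
  fixes p q :: "nat pmf"
  assumes "\<And>s. 0 < s \<Longrightarrow> s < 1 \<Longrightarrow> (\<Sum>k. pmf p k * s^k) = (\<Sum>k. pmf q k * s^k)"
  shows "p = q"
proof (rule pmf_eqI)
  fix m
  have "pmf p m - pmf q m = 0"
  proof (rule powser_unique_zero[where d="\<lambda>k. pmf p k - pmf q k"])
    show "summable (\<lambda>k. pmf p k - pmf q k)"
      using summable_diff[OF pmf_summable_gf[of 1 p] pmf_summable_gf[of 1 q]] by simp
    fix s :: real assume s: "0 < s" "s < 1"
    have "(\<lambda>k. (pmf p k - pmf q k) * s^k) = (\<lambda>k. pmf p k * s^k - pmf q k * s^k)"
      by (simp add: algebra_simps)
    then show "(\<Sum>k. (pmf p k - pmf q k) * s^k) = 0"
      using suminf_diff[OF pmf_summable_gf[of s p] pmf_summable_gf[of s q]] s assms[OF s] by simp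
  qed
  then show "pmf p m = pmf q m" by simp
qed



definition LFx :: "real \<Rightarrow> real \<Rightarrow> nat pmf" where
  "LFx a b = bind_pmf (bernoulli_pmf (1/(a+b))) (\<lambda>x. if x then Geom_plus (a/(a+b)) else return_pmf 0)"

lemma gf_geom_plus:
  fixes p s :: real
  assumes p: "0 < p" "p \<le> 1" and s: "0 \<le> s" "s \<le> 1"
  shows "measure_pmf.expectation (Geom_plus p) (\<lambda>k. s^k) = s * p / (1 - (1-p) * s)"
proof -
  have "measure_pmf.expectation (Geom_plus p) (\<lambda>k. s^k) = measure_pmf.expectation (geometric_pmf p) (\<lambda>k. s * s^k)"
    unfolding Geom_plus_def by simp
  also have "\<dots> = s * measure_pmf.expectation (geometric_pmf p) (\<lambda>k. s^k)"
    by (rule integral_mult_right_zero)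
  also have "measure_pmf.expectation (geometric_pmf p) (\<lambda>k. s^k) = (\<Sum>k. pmf (geometric_pmf p) k * s^k)"
    by (rule gf_expect[OF s])
  also have "(\<lambda>k. pmf (geometric_pmf p) k * s^k) = (\<lambda>k. p * ((1 - p) * s) ^ k)"
    using p by (simp add: power_mult_distrib mult_ac)
  also have "(\<Sum>k. p * ((1 - p) * s) ^ k) = p / (1 - (1 - p) * s)"
  proof -
    have lt: "\<bar>(1 - p) * s\<bar> < 1"
    proof -
      have "0 \<le> (1 - p) * s" using p s by simp
      moreover have "(1 - p) * s \<le> 1 - p" using p s by (simp add: mult_left_le)
      ultimately show ?thesis using p by simp
    qed
    have "(\<lambda>k. p * ((1 - p) * s) ^ k) sums (p * (1 / (1 - (1 - p) * s)))"
      by (rule sums_mult[OF geometric_sums]) (use lt in simp)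
    then show ?thesis by (simp add: sums_iff)
  qed
  finally show ?thesis by simp
qed

lemma gf_LFx:
  fixes a b s :: real
  assumes ab: "0 < a" "0 \<le> b" "1 \<le> a + b" and s: "0 \<le> s" "s < 1"
  shows "measure_pmf.expectation (LFx a b) (\<lambda>k. s^k) = 1 - 1 / (a/(1-s) + b)"
proof -
  define r where "r = 1/(a+b)"
  define p where "p = a/(a+b)"
  have r: "0 \<le> r" "r \<le> 1" using ab unfolding r_def by auto
  have p: "0 < p" "p \<le> 1" using ab unfolding p_def by auto
  have "measure_pmf.expectation (LFx a b) (\<lambda>k. s^k)
     = measure_pmf.expectation (bernoulli_pmf r)
         (\<lambda>x. measure_pmf.expectation (if x then Geom_plus p else return_pmf 0) (\<lambda>k. s^k))"
    unfolding LFx_def r_def[symmetric] p_def[symmetric]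
    by (rule expectation_bind_pmf_bounded[where B=1]) (use s in \<open>simp add: power_le_one\<close>)
  also have "\<dots> = s * p / (1 - (1-p) * s) * r + (1 - r)"
  proof -
    have "measure_pmf.expectation (Geom_plus p) (\<lambda>k. s^k) = s * p / (1 - (1 - p) * s)"
      using gf_geom_plus[OF p, of s] s by simp
    then show ?thesis using r by simp
  qed
  also have "\<dots> = 1 - 1 / (a/(1-s) + b)"
  proof -
    have d1: "1 - (1 - p) * s > 0"
    proof -
      have "(1 - p) * s \<le> 1 - p" using p s by (simp add: mult_left_le)
      then show ?thesis using p by simp
    qed
    define D where "D = a + b"
    define E where "E = D - b * s"
    have D: "D > 0" using ab unfolding D_def by simp
    have "b * s \<le> b" using ab s by (simp add: mult_left_le)
    then have E: "E > 0" using ab unfolding E_def D_def by simp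
    have e1: "1 - (1 - p) * s = E / D"
      unfolding p_def E_def D_def using D D_def by (simp add: field_simps)
    have e2: "a/(1-s) + b = E / (1-s)"
      unfolding E_def D_def using s by (simp add: field_simps)
    have "s * p / (1 - (1 - p) * s) * r + (1 - r) = s * (a/D) / (E/D) * (1/D) + (1 - 1/D)"
      unfolding e1 unfolding p_def r_def D_def ..
    also have "\<dots> = 1 - (1 - s * a / E) / D"
      using D E by (simp add: field_simps)
    also have "1 - s * a / E = (E - s * a) / E" using E by (simp add: field_simps)
    also have "E - s * a = D * (1 - s)" unfolding E_def D_def by (simp add: algebra_simps)
    also have "1 - D * (1 - s) / E / D = 1 - 1 / (E / (1-s))" using D E s by (simp add: field_simps)
    finally show ?thesis unfolding e2 .
  qed
  finally show ?thesis .
qed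

lemma LF_eq_LFx:
  fixes a b :: real
  assumes ab: "0 < a" "0 \<le> b" "1 \<le> a + b"
  shows "LF a b = LFx a b"
  unfolding LF_def
proof (rule the_equality)
  show "\<forall>s\<in>{0..<1::real}. 1 / (1 - (\<Sum>k. pmf (LFx a b) k * s ^ k)) = a / (1 - s) + b"
  proof
    fix s :: real assume s: "s \<in> {0..<1}"
    have "(\<Sum>k. pmf (LFx a b) k * s ^ k) = 1 - 1 / (a/(1-s) + b)"
      using gf_expect[of s "LFx a b"] gf_LFx[OF ab, of s] s by simp
    moreover have "a/(1-s) + b > 0" using ab s by (simp add: add_pos_nonneg)
    ultimately show "1 / (1 - (\<Sum>k. pmf (LFx a b) k * s ^ k)) = a / (1 - s) + b" by simp
  qed
next
  fix q :: "nat pmf"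
  assume h: "\<forall>s\<in>{0..<1::real}. 1 / (1 - (\<Sum>k. pmf q k * s ^ k)) = a / (1 - s) + b"
  show "q = LFx a b"
  proof (rule pmf_eq_from_gf)
    fix s :: real assume s: "0 < s" "s < 1"
    have pos: "a/(1-s) + b > 0" using ab s by (simp add: add_pos_nonneg)
    have e: "1 / (1 - (\<Sum>k. pmf q k * s ^ k)) = a / (1 - s) + b" using h s by simp
    then have "(1 - (\<Sum>k. pmf q k * s ^ k)) = 1 / (a / (1 - s) + b)"
      using pos by (metis div_by_0 divide_divide_eq_right less_irrefl mult_1 nonzero_mult_div_cancel_left)
    then have "(\<Sum>k. pmf q k * s ^ k) = 1 - 1 / (a/(1-s) + b)" by simp
    also have "\<dots> = (\<Sum>k. pmf (LFx a b) k * s ^ k)"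
      using gf_expect[of s "LFx a b"] gf_LFx[OF ab, of s] s by simp
    finally show "(\<Sum>k. pmf q k * s ^ k) = (\<Sum>k. pmf (LFx a b) k * s ^ k)" .
  qed
qed



definition Gf :: "nat pmf \<Rightarrow> real \<Rightarrow> real" where
  "Gf q s = measure_pmf.expectation q (\<lambda>k. s^k)"

lemma Gf_bounds:
  assumes "0 \<le> s" "s \<le> 1"
  shows "0 \<le> Gf q s" "Gf q s \<le> 1"
proof -
  show "0 \<le> Gf q s" unfolding Gf_def using assms by (intro integral_nonneg_AE) simp
  have "Gf q s \<le> measure_pmf.expectation q (\<lambda>k. 1::real)"
    unfolding Gf_def
    by (rule integral_mono[OF integrable_pow_pmf[OF assms]]) (use assms in \<open>simp_all add: power_le_one\<close>)
  then show "Gf q s \<le> 1" by simp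
qed

lemma Gf_conv_pow:
  assumes s: "0 \<le> s" "s \<le> 1"
  shows "Gf (conv_pow q m) s = (Gf q s) ^ m"
proof (induction m)
  case 0
  then show ?case by (simp add: Gf_def)
next
  case (Suc m)
  have "Gf (conv_pow q (Suc m)) s
      = measure_pmf.expectation q (\<lambda>x. measure_pmf.expectation (map_pmf ((+) x) (conv_pow q m)) (\<lambda>k. s^k))"
    unfolding Gf_def conv_pow.simps
    by (rule expectation_bind_pmf_bounded[where B=1]) (use s in \<open>simp add: power_le_one\<close>)
  also have "\<dots> = measure_pmf.expectation q (\<lambda>x. s^x * Gf (conv_pow q m) s)"
  proof -
    have "measure_pmf.expectation (map_pmf ((+) x) (conv_pow q m)) (\<lambda>k. s^k) = s^x * Gf (conv_pow q m) s" for x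
    proof -
      have "measure_pmf.expectation (map_pmf ((+) x) (conv_pow q m)) (\<lambda>k. s^k)
          = measure_pmf.expectation (conv_pow q m) (\<lambda>k. s^x * s^k)"
        by (simp add: power_add)
      also have "\<dots> = s^x * Gf (conv_pow q m) s" unfolding Gf_def by (rule integral_mult_right_zero)
      finally show ?thesis .
    qed
    then show ?thesis by simp
  qed
  also have "\<dots> = Gf q s * Gf (conv_pow q m) s"
    unfolding Gf_def by (rule integral_mult_left_zero)
  finally show ?case using Suc by simp
qed

fun genp :: "(nat \<Rightarrow> nat pmf) \<Rightarrow> nat \<Rightarrow> nat \<Rightarrow> nat \<Rightarrow> nat pmf" where
  "genp env j k 0 = return_pmf k"
| "genp env j k (Suc m) = bind_pmf (genp env j k m) (conv_pow (env (j + m + 1)))"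

fun compg :: "(nat \<Rightarrow> nat pmf) \<Rightarrow> nat \<Rightarrow> nat \<Rightarrow> real \<Rightarrow> real" where
  "compg env j 0 s = s"
| "compg env j (Suc m) s = compg env j m (Gf (env (j + m + 1)) s)"

lemma comp_bounds:
  "0 \<le> s \<Longrightarrow> s \<le> 1 \<Longrightarrow> 0 \<le> compg env j m s \<and> compg env j m s \<le> 1"
proof (induction m arbitrary: s)
  case 0 then show ?case by simp
next
  case (Suc m)
  show ?case using Suc.IH[OF Gf_bounds[OF Suc.prems]] by simp
qed

lemma Gf_genp:
  "0 \<le> s \<Longrightarrow> s \<le> 1 \<Longrightarrow> Gf (genp env j k m) s = (compg env j m s) ^ k"
proof (induction m arbitrary: s)
  case 0 then show ?case by (simp add: Gf_def)
next
  case (Suc m)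
  have "Gf (genp env j k (Suc m)) s
      = measure_pmf.expectation (genp env j k m) (\<lambda>z. Gf (conv_pow (env (j + m + 1)) z) s)"
    unfolding Gf_def genp.simps
    by (rule expectation_bind_pmf_bounded[where B=1]) (use Suc.prems in \<open>simp add: power_le_one\<close>)
  also have "\<dots> = measure_pmf.expectation (genp env j k m) (\<lambda>z. (Gf (env (j + m + 1)) s) ^ z)"
    using Gf_conv_pow[OF Suc.prems] by simp
  also have "\<dots> = Gf (genp env j k m) (Gf (env (j + m + 1)) s)" unfolding Gf_def ..
  also have "\<dots> = compg env j m (Gf (env (j + m + 1)) s) ^ k"
    using Suc.IH Gf_bounds[OF Suc.prems] by simp
  finally show ?case by simp
qed

lemma length_gw_traj: "zs \<in> set_pmf (gw_traj env n) \<Longrightarrow> length zs = Suc n"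
  by (induction n arbitrary: zs) auto

lemma traj_joint:
  "map_pmf (\<lambda>zs. (zs ! j, zs ! (j + m))) (gw_traj env (j + m))
   = bind_pmf (map_pmf (\<lambda>zs. zs ! j) (gw_traj env j)) (\<lambda>k. map_pmf (Pair k) (genp env j k m))"
proof (induction m)
  case 0
  show ?case by (simp add: map_pmf_def bind_assoc_pmf bind_return_pmf)
next
  case (Suc m)
  have "map_pmf (\<lambda>zs. (zs ! j, zs ! (j + Suc m))) (gw_traj env (j + Suc m))
     = bind_pmf (gw_traj env (j + m))
         (\<lambda>zs. map_pmf (\<lambda>z. (zs ! j, z)) (conv_pow (env (j + m + 1)) (zs ! (j + m))))"
    unfolding add_Suc_right gw_traj.simps map_bind_pmf map_pmf_comp
  proof (rule bind_pmf_cong[OF refl])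
    fix zs assume "zs \<in> set_pmf (gw_traj env (j + m))"
    then have l: "length zs = Suc (j + m)" by (rule length_gw_traj)
    then have "zs \<noteq> []" by auto
    then have "last zs = zs ! (length zs - 1)" by (rule last_conv_nth)
    then have "last zs = zs ! (j + m)" using l by simp
    moreover have "\<And>z. (zs @ [z]) ! j = zs ! j" using l by (simp add: nth_append)
    moreover have "\<And>z. (zs @ [z]) ! Suc (j + m) = z" using l by (simp add: nth_append)
    ultimately show "map_pmf (\<lambda>x. ((zs @ [x]) ! j, (zs @ [x]) ! Suc (j + m))) (conv_pow (env (Suc (j + m))) (last zs))
        = map_pmf (\<lambda>z. (zs ! j, z)) (conv_pow (env (j + m + 1)) (zs ! (j + m)))" by simp
  qed
  also have "\<dots> = bind_pmf (map_pmf (\<lambda>zs. (zs ! j, zs ! (j + m))) (gw_traj env (j + m)))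
         (\<lambda>(k, y). map_pmf (Pair k) (conv_pow (env (j + m + 1)) y))"
    by (simp add: bind_map_pmf)
  also have "\<dots> = bind_pmf (map_pmf (\<lambda>zs. zs ! j) (gw_traj env j)) (\<lambda>k. map_pmf (Pair k) (genp env j k (Suc m)))"
    unfolding Suc by (simp add: bind_assoc_pmf bind_map_pmf map_bind_pmf)
  finally show ?case .
qed

lemma traj_first: "map_pmf (\<lambda>zs. zs ! 0) (gw_traj env n) = return_pmf 1"
proof (induction n)
  case 0 then show ?case by simp
next
  case (Suc n)
  have "map_pmf (\<lambda>zs. zs ! 0) (gw_traj env (Suc n)) = bind_pmf (gw_traj env n) (\<lambda>zs. return_pmf (zs ! 0))"
    unfolding gw_traj.simps map_bind_pmf map_pmf_comp
  proof (rule bind_pmf_cong[OF refl])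
    fix zs assume "zs \<in> set_pmf (gw_traj env n)"
    then have l: "length zs = Suc n" by (rule length_gw_traj)
    then have "\<And>z. (zs @ [z]) ! 0 = zs ! 0" by (simp add: nth_append)
    then show "map_pmf (\<lambda>x. (zs @ [x]) ! 0) (conv_pow (env (Suc n)) (last zs)) = return_pmf (zs ! 0)"
      by simp
  qed
  also have "\<dots> = map_pmf (\<lambda>zs. zs ! 0) (gw_traj env n)" by (simp add: map_pmf_def)
  finally have "map_pmf (\<lambda>zs. zs ! 0) (gw_traj env (Suc n)) = map_pmf (\<lambda>zs. zs ! 0) (gw_traj env n)" .
  then show ?case using Suc by simp
qed

lemma traj_marg: "map_pmf (\<lambda>zs. zs ! n) (gw_traj env n) = genp env 0 1 n"
proof -
  have "map_pmf (\<lambda>zs. zs ! n) (gw_traj env n) = map_pmf snd (map_pmf (\<lambda>zs. (zs ! 0, zs ! (0 + n))) (gw_traj env (0 + n)))"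
    by (simp add: map_pmf_comp)
  also have "\<dots> = genp env 0 1 n"
    unfolding traj_joint traj_first by (simp add: bind_return_pmf map_pmf_comp)
  finally show ?thesis .
qed



lemma meas_joint:
  "measure_pmf.prob (gw_traj env (n + l)) {zs. (zs ! n, zs ! (n + l)) \<in> T}
   = measure_pmf.expectation (genp env 0 1 n)
       (\<lambda>k. measure_pmf.expectation (genp env n k l) (\<lambda>z. indicator T (k, z)))"
proof -
  have "measure_pmf.prob (gw_traj env (n + l)) {zs. (zs ! n, zs ! (n + l)) \<in> T}
      = measure_pmf.prob (map_pmf (\<lambda>zs. (zs ! n, zs ! (n + l))) (gw_traj env (n + l))) T"
    by (simp add: vimage_def)
  also have "\<dots> = measure_pmf.prob (bind_pmf (genp env 0 1 n) (\<lambda>k. map_pmf (Pair k) (genp env n k l))) T"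
    unfolding traj_joint traj_marg ..
  also have "\<dots> = measure_pmf.expectation (bind_pmf (genp env 0 1 n) (\<lambda>k. map_pmf (Pair k) (genp env n k l))) (indicator T)"
    by simp
  also have "\<dots> = measure_pmf.expectation (genp env 0 1 n)
       (\<lambda>k. measure_pmf.expectation (map_pmf (Pair k) (genp env n k l)) (indicator T))"
    by (rule expectation_bind_pmf_bounded[where B=1]) (simp add: indicator_def)
  also have "\<dots> = measure_pmf.expectation (genp env 0 1 n)
       (\<lambda>k. measure_pmf.expectation (genp env n k l) (\<lambda>z. indicator T (k, z)))"
    by (simp only: integral_map_pmf)
  finally show ?thesis .
qed

lemma zero_pow_indicator: "(0::real) ^ z = indicator {0} z"
  by (cases z) auto

lemma prob_S:
  "measure_pmf.prob (gw_traj env (n + l)) {zs. zs ! n > 0 \<and> zs ! (n + l) = 0}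
   = compg env 0 n (compg env n l 0) - compg env 0 n 0"
proof -
  define q where "q = compg env n l 0"
  have q: "0 \<le> q" "q \<le> 1" unfolding q_def using comp_bounds[of 0] by auto
  have "measure_pmf.prob (gw_traj env (n + l)) {zs. zs ! n > 0 \<and> zs ! (n + l) = 0}
      = measure_pmf.prob (gw_traj env (n + l)) {zs. (zs ! n, zs ! (n + l)) \<in> {(k, z). k > 0 \<and> z = 0}}"
    by simp
  also have "\<dots> = measure_pmf.expectation (genp env 0 1 n)
       (\<lambda>k. measure_pmf.expectation (genp env n k l) (\<lambda>z. indicator {(k, z). k > 0 \<and> z = 0} (k, z)))"
    by (rule meas_joint)
  also have "\<dots> = measure_pmf.expectation (genp env 0 1 n) (\<lambda>k. q ^ k - 0 ^ k)"
  proof (rule Bochner_Integration.integral_cong[OF refl])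
    fix k
    show "measure_pmf.expectation (genp env n k l) (\<lambda>z. indicator {(k, z). k > 0 \<and> z = 0} (k, z)) = q ^ k - 0 ^ k"
    proof (cases "k > 0")
      case True
      then have "(\<lambda>z. indicator {(k, z). k > 0 \<and> z = 0} (k, z) :: real) = (\<lambda>z. 0 ^ z)"
        by (auto simp: zero_pow_indicator indicator_def)
      then have "measure_pmf.expectation (genp env n k l) (\<lambda>z. indicator {(k, z). k > 0 \<and> z = 0} (k, z))
          = Gf (genp env n k l) 0" unfolding Gf_def by simp
      also have "\<dots> = q ^ k" unfolding q_def by (simp add: Gf_genp)
      finally show ?thesis using True by simp
    next
      case False
      then show ?thesis by (simp add: indicator_def)
    qed
  qed
  also have "\<dots> = Gf (genp env 0 1 n) q - Gf (genp env 0 1 n) 0"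
    unfolding Gf_def
    by (rule Bochner_Integration.integral_diff[OF integrable_pow_pmf[OF q] integrable_pow_pmf]) simp_all
  also have "\<dots> = compg env 0 n q - compg env 0 n 0"
    using q by (simp add: Gf_genp)
  finally show ?thesis unfolding q_def .
qed

lemma prob_S_k:
  "measure_pmf.prob (gw_traj env (n + l)) {zs. zs ! n = k \<and> zs ! n > 0 \<and> zs ! (n + l) = 0}
   = pmf (genp env 0 1 n) k * (if k > 0 then (compg env n l 0) ^ k else 0)"
proof -
  define q where "q = compg env n l 0"
  define c where "c = (if k > 0 then q ^ k else 0)"
  have "measure_pmf.prob (gw_traj env (n + l)) {zs. zs ! n = k \<and> zs ! n > 0 \<and> zs ! (n + l) = 0}
      = measure_pmf.prob (gw_traj env (n + l)) {zs. (zs ! n, zs ! (n + l)) \<in> {(k', z). k' = k \<and> k' > 0 \<and> z = 0}}"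
    by simp
  also have "\<dots> = measure_pmf.expectation (genp env 0 1 n)
       (\<lambda>k'. measure_pmf.expectation (genp env n k' l) (\<lambda>z. indicator {(k', z). k' = k \<and> k' > 0 \<and> z = 0} (k', z)))"
    by (rule meas_joint)
  also have "\<dots> = measure_pmf.expectation (genp env 0 1 n) (\<lambda>k'. indicator {k} k' * c)"
  proof (rule Bochner_Integration.integral_cong[OF refl])
    fix k'
    show "measure_pmf.expectation (genp env n k' l) (\<lambda>z. indicator {(k', z). k' = k \<and> k' > 0 \<and> z = 0} (k', z))
       = indicator {k} k' * c"
    proof (cases "k' = k \<and> k > 0")
      case True
      then have "(\<lambda>z. indicator {(k', z). k' = k \<and> k' > 0 \<and> z = 0} (k', z) :: real) = (\<lambda>z. 0 ^ z)"
        by (auto simp: zero_pow_indicator indicator_def)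
      then have "measure_pmf.expectation (genp env n k' l) (\<lambda>z. indicator {(k', z). k' = k \<and> k' > 0 \<and> z = 0} (k', z))
          = Gf (genp env n k' l) 0" unfolding Gf_def by simp
      also have "\<dots> = q ^ k'" unfolding q_def by (simp add: Gf_genp)
      finally show ?thesis using True by (simp add: c_def)
    next
      case False
      then show ?thesis by (auto simp: indicator_def c_def)
    qed
  qed
  also have "\<dots> = pmf (genp env 0 1 n) k * c"
    by (simp add: measure_pmf_single)
  finally show ?thesis unfolding c_def q_def .
qed



lemma Gf_LF:
  assumes ab: "0 < a" "0 \<le> b" "1 \<le> a + b" and s: "0 \<le> s" "s < 1"
  shows "Gf (LF a b) s = 1 - 1 / (a/(1-s) + b)"
  unfolding Gf_def LF_eq_LFx[OF ab] by (rule gf_LFx[OF ab s])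

lemma Pi_env_Suc: "Pi_env A (Suc k) \<omega> = Pi_env A k \<omega> * A (Suc k) \<omega>"
  unfolding Pi_env_def by (simp add: prod.cl_ivl_Suc)

lemma Rm1_env_Suc: "Rm1_env A B (Suc k) \<omega> = Rm1_env A B k \<omega> + B (Suc k) \<omega> / Pi_env A (Suc k) \<omega>"
  unfolding Rm1_env_def by (simp add: sum.cl_ivl_Suc)

lemma Pi_env_pos:
  assumes "\<And>i. 1 \<le> i \<Longrightarrow> i \<le> N \<Longrightarrow> 0 < A i \<omega>"
  shows "k \<le> N \<Longrightarrow> 0 < Pi_env A k \<omega>"
  unfolding Pi_env_def using assms by (intro prod_pos) auto

lemma comp_formula:
  fixes A B :: "nat \<Rightarrow> 'a \<Rightarrow> real"
  assumes good: "\<And>i. 1 \<le> i \<Longrightarrow> i \<le> N \<Longrightarrow> 0 < A i \<omega> \<and> 0 \<le> B i \<omega> \<and> 1 \<le> A i \<omega> + B i \<omega>"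
  shows "j + m \<le> N \<Longrightarrow> 0 \<le> s \<Longrightarrow> s < 1 \<Longrightarrow>
     compg (rev_env A B N \<omega>) j m s
       = 1 - 1 / (Pi_env A (N - j) \<omega> / Pi_env A (N - j - m) \<omega> / (1 - s)
                  + Pi_env A (N - j) \<omega> * (Rm1_env A B (N - j) \<omega> - Rm1_env A B (N - j - m) \<omega>))
     \<and> 1 \<le> Pi_env A (N - j) \<omega> / Pi_env A (N - j - m) \<omega> / (1 - s)
                  + Pi_env A (N - j) \<omega> * (Rm1_env A B (N - j) \<omega> - Rm1_env A B (N - j - m) \<omega>)"
proof (induction m arbitrary: s)
  case 0
  have "0 < Pi_env A (N - j) \<omega>" by (rule Pi_env_pos[of N]) (use good in auto)
  then show ?case using 0 by (simp add: field_simps)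
next
  case (Suc m)
  define k where "k = N - j - Suc m"
  have kk: "N - j - m = Suc k" using Suc.prems unfolding k_def by simp
  have k1: "1 \<le> Suc k" "Suc k \<le> N" using Suc.prems unfolding k_def by auto
  define a where "a = A (Suc k) \<omega>"
  define b where "b = B (Suc k) \<omega>"
  have ab: "0 < a" "0 \<le> b" "1 \<le> a + b" using good[OF k1] unfolding a_def b_def by auto
  have env: "rev_env A B N \<omega> (j + m + 1) = LF a b"
    unfolding rev_env_def a_def b_def using Suc.prems unfolding k_def by (simp add: Suc_diff_Suc)
  define X where "X = a/(1-s) + b"
  have "a \<le> a / (1 - s)" using ab Suc.prems by (simp add: field_simps mult_left_le)
  then have X1: "1 \<le> X" unfolding X_def using ab by simp
  define s' where "s' = 1 - 1 / X"
  have s': "0 \<le> s'" "s' < 1" unfolding s'_def using X1 by auto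
  have gs: "Gf (rev_env A B N \<omega> (j + m + 1)) s = s'"
    unfolding env s'_def X_def by (rule Gf_LF[OF ab Suc.prems(2,3)])
  have IH: "compg (rev_env A B N \<omega>) j m s'
       = 1 - 1 / (Pi_env A (N - j) \<omega> / Pi_env A (N - j - m) \<omega> / (1 - s')
                  + Pi_env A (N - j) \<omega> * (Rm1_env A B (N - j) \<omega> - Rm1_env A B (N - j - m) \<omega>))"
    using Suc.IH[OF _ s'] Suc.prems by simp
  have pk: "0 < Pi_env A k \<omega>" by (rule Pi_env_pos[of N]) (use good k1 in auto)
  have pj: "0 < Pi_env A (N - j) \<omega>" by (rule Pi_env_pos[of N]) (use good in auto)
  have oms: "1 - s' = 1 / X" unfolding s'_def by simp
  have "Pi_env A (N - j) \<omega> / Pi_env A (N - j - m) \<omega> / (1 - s')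
                  + Pi_env A (N - j) \<omega> * (Rm1_env A B (N - j) \<omega> - Rm1_env A B (N - j - m) \<omega>)
      = Pi_env A (N - j) \<omega> / Pi_env A (N - j - Suc m) \<omega> / (1 - s)
                  + Pi_env A (N - j) \<omega> * (Rm1_env A B (N - j) \<omega> - Rm1_env A B (N - j - Suc m) \<omega>)"
    unfolding kk oms k_def[symmetric] Pi_env_Suc Rm1_env_Suc X_def a_def[symmetric] b_def[symmetric]
    using pk ab Suc.prems by (simp add: field_simps)
  moreover have "1 \<le> Pi_env A (N - j) \<omega> / Pi_env A (N - j - m) \<omega> / (1 - s')
                  + Pi_env A (N - j) \<omega> * (Rm1_env A B (N - j) \<omega> - Rm1_env A B (N - j - m) \<omega>)"
    using Suc.IH[OF _ s'] Suc.prems by simp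
  ultimately show ?case using IH gs by simp
qed



lemma pmf_Geom_plus:
  assumes "0 < p" "p \<le> 1"
  shows "pmf (Geom_plus p) k = (if k = 0 then 0 else p * (1 - p) ^ (k - 1))"
proof (cases k)
  case 0
  then show ?thesis unfolding Geom_plus_def by (simp add: pmf_map_outside)
next
  case (Suc k')
  have "pmf (Geom_plus p) (Suc k') = pmf (geometric_pmf p) k'"
    unfolding Geom_plus_def by (rule pmf_map_inj') (simp add: inj_def)
  then show ?thesis using Suc assms by simp
qed

lemma pmf_LFx_pos:
  assumes ab: "0 < a" "0 \<le> b" "1 \<le> a + b" and k: "k > 0"
  shows "pmf (LFx a b) k = (1 / (a + b)) * pmf (Geom_plus (a / (a + b))) k"
proof -
  have r: "0 \<le> 1 / (a + b)" "1 / (a + b) \<le> 1" using ab by auto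
  show ?thesis
    unfolding LFx_def pmf_bind using r k by (simp add: mult_ac)
qed

lemma measure_cond_pmf:
  assumes "set_pmf p \<inter> S \<noteq> {}"
  shows "measure_pmf.prob (cond_pmf p S) X = measure_pmf.prob p (S \<inter> X) / measure_pmf.prob p S"
proof -
  have "emeasure (measure_pmf p) S \<noteq> 0" using assms by (simp add: emeasure_measure_pmf_not_zero)
  moreover have "emeasure (measure_pmf p) S \<noteq> \<infinity>" by (simp add: measure_pmf.emeasure_eq_measure)
  ultimately show ?thesis
    unfolding cond_pmf.rep_eq[OF assms] by (simp add: measure_uniform_measure)
qed



lemma Pi_env_0 [simp]: "Pi_env A 0 \<omega> = 1" unfolding Pi_env_def by simp
lemma Rm1_env_0 [simp]: "Rm1_env A B 0 \<omega> = 0" unfolding Rm1_env_def by simp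

lemma Rm1_env_mono:
  assumes good: "\<And>i. 1 \<le> i \<Longrightarrow> 0 < A i \<omega> \<and> 0 \<le> B i \<omega>"
  shows "k \<le> k' \<Longrightarrow> Rm1_env A B k \<omega> \<le> Rm1_env A B k' \<omega>"
  unfolding Rm1_env_def
proof (rule sum_mono2)
  show "\<And>b. b \<in> {1..k'} - {1..k} \<Longrightarrow> 0 \<le> B b \<omega> / Pi_env A b \<omega>"
  proof -
    fix i assume "i \<in> {1..k'} - {1..k}"
    then have "1 \<le> i" by auto
    moreover have "0 < Pi_env A i \<omega>" by (rule Pi_env_pos[of i]) (use good in auto)
    ultimately show "0 \<le> B i \<omega> / Pi_env A i \<omega>" using good by simp
  qed
qed auto

lemma alg1:
  fixes a t c :: real
  assumes "a > 0" "t \<ge> 0" "c > 1"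
  shows "1 / (a * (1 + t)) - 1 / (a * (c + t)) = (c - 1) / (a * (1 + t) * (c + t))"
proof -
  have d1: "a * (1 + t) \<noteq> 0" "a * (c + t) \<noteq> 0" using assms by auto
  have "1 / (a * (1 + t)) - 1 / (a * (c + t)) = (1 * (a * (c + t)) - 1 * (a * (1 + t))) / (a * (1 + t) * (a * (c + t)))"
    by (rule diff_frac_eq[OF d1])
  also have "\<dots> = (a * (c - 1)) / (a * (a * (1 + t) * (c + t)))"
    by (simp add: algebra_simps)
  also have "\<dots> = (c - 1) / (a * (1 + t) * (c + t))"
    using assms by simp
  finally show ?thesis .
qed

lemma alg2:
  fixes a t c :: real
  assumes "a > 0" "t \<ge> 0" "c > 1"
  shows "1 / (a * (1 + t)) * (1 / (1 + t)) * (1 - 1/c) / ((c - 1) / (a * (1 + t) * (c + t))) = 1/c + (1 - 1/c) / (1 + t)"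
proof -
  have n: "1 + t \<noteq> 0" "c \<noteq> 0" "c - 1 \<noteq> 0" "a \<noteq> 0" "c + t \<noteq> 0" using assms by auto
  define P where "P = (c - 1) / (a * (1 + t) * (c + t))"
  define X where "X = 1 / (a * (1 + t)) * (1 / (1 + t)) * (1 - 1/c)"
  define R where "R = (c + t) / (c * (1 + t))"
  have P0: "P \<noteq> 0" unfolding P_def using n assms by simp
  have X: "X = (c - 1) / (a * (1 + t) * (1 + t) * c)"
    unfolding X_def using n by (simp add: field_simps)
  have "R * P = ((c + t) * (c - 1)) / ((c + t) * (a * (1 + t) * (1 + t) * c))"
    unfolding R_def P_def by (simp add: mult_ac)
  also have "\<dots> = (c - 1) / (a * (1 + t) * (1 + t) * c)"
    by (rule mult_divide_mult_cancel_left[OF n(5)])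
  finally have "X = R * P" using X by simp
  then have "X / P = R" using P0 by simp
  then have l: "1 / (a * (1 + t)) * (1 / (1 + t)) * (1 - 1/c) / ((c - 1) / (a * (1 + t) * (c + t))) = (c + t) / (c * (1 + t))"
    unfolding X_def P_def R_def .
  have r1: "1/c = (1 + t) / (c * (1 + t))" using n by simp
  have r2: "(1 - 1/c) / (1 + t) = (c - 1) / (c * (1 + t))" using n by (simp add: field_simps)
  have "1/c + (1 - 1/c) / (1 + t) = 1/c + (c - 1) / (c * (1 + t))" using r2 by simp
  also have "\<dots> = (1 + t) / (c * (1 + t)) + (c - 1) / (c * (1 + t))" using r1 by simp
  also have "\<dots> = ((1 + t) + (c - 1)) / (c * (1 + t))" by (rule add_divide_distrib[symmetric])
  also have "\<dots> = (c + t) / (c * (1 + t))" by simp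
  finally have r: "1/c + (1 - 1/c) / (1 + t) = (c + t) / (c * (1 + t))" .
  show ?thesis using l r by simp
qed

lemma alg3:
  fixes t c :: real
  assumes "t \<ge> 0" "c \<ge> 1"
  shows "(1 - 1 / c) / (1 + t / c) * (1 / (1 + t)) = 1 / (1 + t) - 1 / (c + t)"
proof -
  have n: "1 + t \<noteq> 0" "c \<noteq> 0" "c + t \<noteq> 0" using assms by auto
  have h1: "1 - 1 / c = (c - 1) / c" using n by (simp add: field_simps)
  have h2: "1 + t / c = (c + t) / c" using n by (simp add: field_simps)
  have "(1 - 1 / c) / (1 + t / c) = ((c - 1) * c) / (c * (c + t))"
    unfolding h1 h2 by (rule divide_divide_times_eq)
  also have "\<dots> = (c * (c - 1)) / (c * (c + t))" by (simp add: mult.commute)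
  also have "\<dots> = (c - 1) / (c + t)" using n by simp
  finally have l: "(1 - 1 / c) / (1 + t / c) * (1 / (1 + t)) = (c - 1) / ((c + t) * (1 + t))" by simp
  have "1 / (1 + t) - 1 / (c + t) = (1 * (c + t) - 1 * (1 + t)) / ((1 + t) * (c + t))"
    by (rule diff_frac_eq[OF n(1,3)])
  also have "\<dots> = (c - 1) / ((c + t) * (1 + t))" by (simp add: mult.commute)
  finally show ?thesis using l by simp
qed

lemma fixed_n:
  fixes A B :: "nat \<Rightarrow> 'a \<Rightarrow> real" and n l :: nat and \<omega> :: 'a
  assumes good: "\<And>i. 1 \<le> i \<Longrightarrow> 0 < A i \<omega> \<and> 0 \<le> B i \<omega> \<and> 1 \<le> A i \<omega> + B i \<omega>"
  defines "\<alpha> \<equiv> Pi_env A (n + l) \<omega> / Pi_env A l \<omega>"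
    and "Tn \<equiv> Pi_env A l \<omega> * (Rm1_env A B (n + l) \<omega> - Rm1_env A B l \<omega>)"
    and "c \<equiv> c_env A B l \<omega>"
    and "S \<equiv> {zs. zs ! n > 0 \<and> zs ! (n + l) = 0}"
  shows "1 \<le> c" "0 < \<alpha>" "0 \<le> Tn"
    "measure_pmf.prob (Pq A B (n + l) \<omega>) S = 1 / (\<alpha> * (1 + Tn)) - 1 / (\<alpha> * (c + Tn))"
    "c > 1 \<Longrightarrow> map_pmf (\<lambda>zs. zs ! n) (cond_pmf (Pq A B (n + l) \<omega>) S) = Geom_plus (1/c + (1 - 1/c) / (1 + Tn))"
proof -
  define N where "N = n + l"
  define env where "env = rev_env A B N \<omega>"
  have goodN: "\<And>i. 1 \<le> i \<Longrightarrow> i \<le> N \<Longrightarrow> 0 < A i \<omega> \<and> 0 \<le> B i \<omega> \<and> 1 \<le> A i \<omega> + B i \<omega>"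
    using good by blast
  have Ppos: "\<And>k. 0 < Pi_env A k \<omega>"
    by (rule Pi_env_pos[of "_" A \<omega>]) (use good in auto)
  have pl: "0 < Pi_env A l \<omega>" and pN: "0 < Pi_env A N \<omega>" using Ppos by auto
  show apos: "0 < \<alpha>" unfolding \<alpha>_def using Ppos by simp
  have "Rm1_env A B l \<omega> \<le> Rm1_env A B (n + l) \<omega>"
    by (rule Rm1_env_mono) (use good in auto)
  then show Tpos: "0 \<le> Tn" unfolding Tn_def using pl by simp
  have cq: "compg env n l 0 = 1 - 1 / c \<and> 1 \<le> c"
    using comp_formula[where A=A and B=B and \<omega>=\<omega> and N=N, OF goodN, of n l 0] unfolding env_def N_def c_def c_env_def
    by (simp add: algebra_simps)
  then show c1: "1 \<le> c" by simp
  define q where "q = compg env n l 0"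
  have q: "q = 1 - 1 / c" unfolding q_def using cq by simp
  have q01: "0 \<le> q" "q < 1" using c1 q by auto
  have compZ: "compg env 0 n s = 1 - 1 / (\<alpha> / (1 - s) + \<alpha> * Tn) \<and> 1 \<le> \<alpha> / (1 - s) + \<alpha> * Tn"
    if "0 \<le> s" "s < 1" for s
  proof -
    have e: "Pi_env A N \<omega> * (Rm1_env A B N \<omega> - Rm1_env A B l \<omega>) = \<alpha> * Tn"
      unfolding \<alpha>_def Tn_def N_def using pl by simp
    have e2: "Pi_env A N \<omega> / Pi_env A l \<omega> = \<alpha>" unfolding \<alpha>_def N_def ..
    have f: "0 + n \<le> N" unfolding N_def by simp
    have inst: "compg env 0 n s = 1 - 1 / (Pi_env A N \<omega> / Pi_env A (N - n) \<omega> / (1 - s)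
         + Pi_env A N \<omega> * (Rm1_env A B N \<omega> - Rm1_env A B (N - n) \<omega>))
       \<and> 1 \<le> Pi_env A N \<omega> / Pi_env A (N - n) \<omega> / (1 - s)
         + Pi_env A N \<omega> * (Rm1_env A B N \<omega> - Rm1_env A B (N - n) \<omega>)"
      unfolding env_def using comp_formula[where A=A and B=B and \<omega>=\<omega> and N=N and j=0 and m=n and s=s] goodN f that
      by simp
    have nl: "N - n = l" unfolding N_def by simp
    show ?thesis using inst unfolding nl e e2 .
  qed
  have PS: "measure_pmf.prob (Pq A B (n + l) \<omega>) S = compg env 0 n q - compg env 0 n 0"
    unfolding Pq_def S_def env_def N_def q_def by (rule prob_S)
  also have "\<dots> = 1 / (\<alpha> * (1 + Tn)) - 1 / (\<alpha> * (c + Tn))"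
  proof -
    have "compg env 0 n q = 1 - 1 / (\<alpha> * (c + Tn))"
      using compZ[OF q01] c1 unfolding q by (simp add: algebra_simps)
    moreover have "compg env 0 n 0 = 1 - 1 / (\<alpha> * (1 + Tn))"
      using compZ[of 0] by (simp add: algebra_simps)
    ultimately show ?thesis by simp
  qed
  finally show PS': "measure_pmf.prob (Pq A B (n + l) \<omega>) S = 1 / (\<alpha> * (1 + Tn)) - 1 / (\<alpha> * (c + Tn))" .
  assume cgt: "c > 1"
  define th where "th = 1/c + (1 - 1/c) / (1 + Tn)"
  have PSpos: "measure_pmf.prob (Pq A B (n + l) \<omega>) S > 0"
  proof -
    have w: "0 < \<alpha> * (1 + Tn)" using apos Tpos by simp
    have wz: "\<alpha> * (1 + Tn) < \<alpha> * (c + Tn)" using apos cgt by (intro mult_strict_left_mono) auto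
    have "1 / (\<alpha> * (c + Tn)) < 1 / (\<alpha> * (1 + Tn))"
      by (rule frac_less2[OF _ _ w wz]) auto
    then show ?thesis unfolding PS' by simp
  qed
  then have ne: "set_pmf (Pq A B (n + l) \<omega>) \<inter> S \<noteq> {}"
    using measure_pmf_zero_iff[of "Pq A B (n + l) \<omega>" S] by auto
  have Zn: "genp env 0 1 n = LFx \<alpha> (\<alpha> * Tn)"
  proof (rule pmf_eq_from_gf)
    fix s :: real assume s: "0 < s" "s < 1"
    have ab: "0 < \<alpha>" "0 \<le> \<alpha> * Tn" "1 \<le> \<alpha> + \<alpha> * Tn"
      using apos Tpos compZ[of 0] by auto
    have "(\<Sum>k. pmf (genp env 0 1 n) k * s ^ k) = Gf (genp env 0 1 n) s"
      unfolding Gf_def using gf_expect[of s] s by simp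
    also have "\<dots> = compg env 0 n s" using s by (simp add: Gf_genp)
    also have "\<dots> = 1 - 1 / (\<alpha> / (1 - s) + \<alpha> * Tn)" using compZ[of s] s by simp
    also have "\<dots> = measure_pmf.expectation (LFx \<alpha> (\<alpha> * Tn)) (\<lambda>k. s^k)"
      using gf_LFx[OF ab, of s] s by simp
    also have "\<dots> = (\<Sum>k. pmf (LFx \<alpha> (\<alpha> * Tn)) k * s ^ k)"
      using gf_expect[of s] s by simp
    finally show "(\<Sum>k. pmf (genp env 0 1 n) k * s ^ k) = (\<Sum>k. pmf (LFx \<alpha> (\<alpha> * Tn)) k * s ^ k)" .
  qed
  have th01: "0 < th" "th \<le> 1"
  proof -
    have "0 < 1/c" using c1 by simp
    moreover have "0 \<le> (1 - 1/c) / (1 + Tn)" using c1 Tpos by simp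
    ultimately show "0 < th" unfolding th_def by (rule add_pos_nonneg)
    have "(1 - 1/c) / (1 + Tn) \<le> (1 - 1/c) / 1" using c1 Tpos by (intro divide_left_mono) auto
    then show "th \<le> 1" unfolding th_def by simp
  qed
  show "map_pmf (\<lambda>zs. zs ! n) (cond_pmf (Pq A B (n + l) \<omega>) S) = Geom_plus th"
  proof (rule pmf_eqI)
    fix k
    have "pmf (map_pmf (\<lambda>zs. zs ! n) (cond_pmf (Pq A B (n + l) \<omega>) S)) k
        = measure_pmf.prob (Pq A B (n + l) \<omega>) (S \<inter> {zs. zs ! n = k}) / measure_pmf.prob (Pq A B (n + l) \<omega>) S"
      unfolding pmf_map measure_cond_pmf[OF ne] by (simp add: vimage_def)
    also have "S \<inter> {zs. zs ! n = k} = {zs. zs ! n = k \<and> zs ! n > 0 \<and> zs ! (n + l) = 0}"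
      unfolding S_def by auto
    also have "measure_pmf.prob (Pq A B (n + l) \<omega>) \<dots> = pmf (genp env 0 1 n) k * (if k > 0 then q ^ k else 0)"
      unfolding Pq_def env_def N_def q_def by (rule prob_S_k)
    finally have eq: "pmf (map_pmf (\<lambda>zs. zs ! n) (cond_pmf (Pq A B (n + l) \<omega>) S)) k
       = pmf (LFx \<alpha> (\<alpha> * Tn)) k * (if k > 0 then q ^ k else 0) / (1 / (\<alpha> * (1 + Tn)) - 1 / (\<alpha> * (c + Tn)))"
      unfolding Zn PS' .
    show "pmf (map_pmf (\<lambda>zs. zs ! n) (cond_pmf (Pq A B (n + l) \<omega>) S)) k = pmf (Geom_plus th) k"
    proof (cases "k = 0")
      case True
      then show ?thesis unfolding eq using th01 by (simp add: pmf_Geom_plus)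
    next
      case False
      then obtain k' where k': "k = Suc k'" by (cases k) auto
      have ab: "0 < \<alpha>" "0 \<le> \<alpha> * Tn" "1 \<le> \<alpha> + \<alpha> * Tn"
        using apos Tpos compZ[of 0] by auto
      have p: "\<alpha> / (\<alpha> + \<alpha> * Tn) = 1 / (1 + Tn)"
      proof -
        have "\<alpha> + \<alpha> * Tn = \<alpha> * (1 + Tn)" by (simp add: algebra_simps)
        moreover have "1 + Tn \<noteq> 0" using Tpos by simp
        ultimately show ?thesis using apos by simp
      qed
      have p01: "0 < 1 / (1 + Tn)" "1 / (1 + Tn) \<le> 1" using Tpos by auto
      have LFk: "pmf (LFx \<alpha> (\<alpha> * Tn)) k = 1 / (\<alpha> * (1 + Tn)) * (1 / (1 + Tn) * (1 - 1 / (1 + Tn)) ^ k')"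
        using pmf_LFx_pos[OF ab, of k] k' unfolding p pmf_Geom_plus[OF p01]
        by (simp add: algebra_simps)
      have omth: "1 - th = (1 - 1 / (1 + Tn)) * q"
      proof -
        have "1 - th = (1 - 1/c) - (1 - 1/c) * (1 / (1 + Tn))" unfolding th_def by simp
        also have "\<dots> = (1 - 1 / (1 + Tn)) * (1 - 1/c)" by (simp add: algebra_simps)
        finally show ?thesis unfolding q .
      qed
      have g: "pmf (Geom_plus th) k = th * ((1 - 1 / (1 + Tn)) * q) ^ k'"
        unfolding pmf_Geom_plus[OF th01] omth using k' by simp
      have m: "pmf (map_pmf (\<lambda>zs. zs ! n) (cond_pmf (Pq A B (n + l) \<omega>) S)) k
          = (1 / (\<alpha> * (1 + Tn)) * (1 / (1 + Tn)) * q / (1 / (\<alpha> * (1 + Tn)) - 1 / (\<alpha> * (c + Tn))))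
            * ((1 - 1 / (1 + Tn)) * q) ^ k'"
        unfolding eq LFk using k' by (simp add: power_mult_distrib mult_ac)
      have K: "1 / (\<alpha> * (1 + Tn)) * (1 / (1 + Tn)) * q / (1 / (\<alpha> * (1 + Tn)) - 1 / (\<alpha> * (c + Tn))) = th"
        unfolding alg1[OF apos Tpos cgt] th_def q by (rule alg2[OF apos Tpos cgt])
      show ?thesis unfolding g m K ..
    qed
  qed
qed



lemma tv_bound:
  fixes p q :: "nat pmf"
  shows "\<bar>measure_pmf.prob p S - measure_pmf.prob q S\<bar>
     \<le> (\<Sum>k\<le>K. \<bar>pmf p k - pmf q k\<bar>) + (1 - measure_pmf.prob p {..K}) + (1 - measure_pmf.prob q {..K})"
proof -
  have split: "measure_pmf.prob r S = (\<Sum>k\<in>S \<inter> {..K}. pmf r k) + measure_pmf.prob r (S - {..K})" for r :: "nat pmf"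
  proof -
    have "measure_pmf.prob r S = measure_pmf.prob r ((S \<inter> {..K}) \<union> (S - {..K}))"
      by (metis Int_Diff_Un)
    also have "\<dots> = measure_pmf.prob r (S \<inter> {..K}) + measure_pmf.prob r (S - {..K})"
      by (rule measure_pmf.finite_measure_Union) auto
    also have "measure_pmf.prob r (S \<inter> {..K}) = (\<Sum>k\<in>S \<inter> {..K}. pmf r k)"
      by (rule measure_measure_pmf_finite) simp
    finally show ?thesis .
  qed
  have tail: "0 \<le> measure_pmf.prob r (S - {..K}) \<and> measure_pmf.prob r (S - {..K}) \<le> 1 - measure_pmf.prob r {..K}"
    for r :: "nat pmf"
  proof -
    have "measure_pmf.prob r (S - {..K}) \<le> measure_pmf.prob r (UNIV - {..K})"
      by (rule measure_pmf.finite_measure_mono) auto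
    also have "\<dots> = 1 - measure_pmf.prob r {..K}"
      using measure_pmf.prob_compl[of "{..K}" r] by simp
    finally show ?thesis by simp
  qed
  have fin: "\<bar>(\<Sum>k\<in>S \<inter> {..K}. pmf p k) - (\<Sum>k\<in>S \<inter> {..K}. pmf q k)\<bar> \<le> (\<Sum>k\<le>K. \<bar>pmf p k - pmf q k\<bar>)"
  proof -
    have "\<bar>(\<Sum>k\<in>S \<inter> {..K}. pmf p k) - (\<Sum>k\<in>S \<inter> {..K}. pmf q k)\<bar> = \<bar>\<Sum>k\<in>S \<inter> {..K}. pmf p k - pmf q k\<bar>"
      by (simp add: sum_subtractf)
    also have "\<dots> \<le> (\<Sum>k\<in>S \<inter> {..K}. \<bar>pmf p k - pmf q k\<bar>)" by (rule sum_abs)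
    also have "\<dots> \<le> (\<Sum>k\<le>K. \<bar>pmf p k - pmf q k\<bar>)" by (rule sum_mono2) auto
    finally show ?thesis .
  qed
  show ?thesis using split[of p] split[of q] tail[of p] tail[of q] fin by linarith
qed

lemma aux_quarter: "(x::real) < r / 4 \<Longrightarrow> 2 * x < r / 2" by linarith

lemma tv_conv:
  fixes p :: "nat \<Rightarrow> nat pmf" and q :: "nat pmf"
  assumes conv: "\<And>k. (\<lambda>n. pmf (p n) k) \<longlonglongrightarrow> pmf q k"
  shows "(\<lambda>n. tv_dist (p n) q) \<longlonglongrightarrow> 0"
proof (rule LIMSEQ_I)
  fix r :: real assume r: "0 < r"
  define D where "D n K = (\<Sum>k\<le>K. \<bar>pmf (p n) k - pmf q k\<bar>) + (1 - measure_pmf.prob (p n) {..K}) + (1 - measure_pmf.prob q {..K})" for n K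
  have tvle: "tv_dist (p n) q \<le> D n K" for n K
    unfolding tv_dist_def D_def by (rule cSUP_least, simp, rule tv_bound)
  have tvge: "0 \<le> tv_dist (p n) q" for n
  proof -
    have bdd: "bdd_above (range (\<lambda>S. \<bar>measure_pmf.prob (p n) S - measure_pmf.prob q S\<bar>))"
      by (rule bdd_aboveI2[where M="D n 0"]) (unfold D_def, rule tv_bound)
    have "\<bar>measure_pmf.prob (p n) {} - measure_pmf.prob q {}\<bar> \<le> tv_dist (p n) q"
      unfolding tv_dist_def by (rule cSUP_upper[OF _ bdd]) simp
    then show ?thesis by simp
  qed
  have "(\<lambda>K. measure_pmf.prob q {..K}) \<longlonglongrightarrow> measure_pmf.prob q (\<Union>K. {..K})"
    by (rule measure_pmf.finite_Lim_measure_incseq) (auto simp: incseq_def)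
  moreover have "(\<Union>K. {..K::nat}) = UNIV" by auto
  ultimately have "(\<lambda>K. measure_pmf.prob q {..K}) \<longlonglongrightarrow> 1" by simp
  then have "(\<lambda>K. 1 - measure_pmf.prob q {..K}) \<longlonglongrightarrow> 1 - 1"
    by (intro tendsto_intros)
  then have lim0: "(\<lambda>K. 1 - measure_pmf.prob q {..K}) \<longlonglongrightarrow> 0" by simp
  have "eventually (\<lambda>K. 1 - measure_pmf.prob q {..K} < r / 4) sequentially"
    by (rule order_tendstoD(2)[OF lim0]) (use r in simp)
  then obtain K0 where K0: "\<And>K. K \<ge> K0 \<Longrightarrow> 1 - measure_pmf.prob q {..K} < r / 4"
    by (auto simp: eventually_sequentially)
  define K where "K = K0"
  have K: "1 - measure_pmf.prob q {..K} < r / 4" unfolding K_def by (rule K0) simp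
  have lim: "(\<lambda>n. D n K) \<longlonglongrightarrow> (\<Sum>k\<le>K. \<bar>pmf q k - pmf q k\<bar>) + (1 - measure_pmf.prob q {..K}) + (1 - measure_pmf.prob q {..K})"
  proof -
    have m: "measure_pmf.prob r {..K} = (\<Sum>k\<le>K. pmf r k)" for r
      by (rule measure_measure_pmf_finite) simp
    show ?thesis unfolding D_def m
      by (intro tendsto_intros conv)
  qed
  then have lim': "(\<lambda>n. D n K) \<longlonglongrightarrow> 2 * (1 - measure_pmf.prob q {..K})" by simp
  have "2 * (1 - measure_pmf.prob q {..K}) < r / 2" by (rule aux_quarter[OF K])
  then have "eventually (\<lambda>n. D n K < r) sequentially"
    using order_tendstoD(2)[OF lim', of r] r by simp
  then obtain no where no: "\<And>n. n \<ge> no \<Longrightarrow> D n K < r" by (auto simp: eventually_sequentially)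
  show "\<exists>no. \<forall>n\<ge>no. norm (tv_dist (p n) q - 0) < r"
  proof (intro exI allI impI)
    fix n assume "n \<ge> no"
    then show "norm (tv_dist (p n) q - 0) < r" using tvle[of n K] tvge[of n] no[of n] by simp
  qed
qed

lemma expectation_Geom_plus:
  assumes "0 < p" "p \<le> 1"
  shows "measure_pmf.expectation (Geom_plus p) real = 1 / p"
proof -
  have i: "integrable (geometric_pmf p) real" using integrable_real_geometric_pmf[of p] assms by simp
  have "measure_pmf.expectation (Geom_plus p) real = measure_pmf.expectation (geometric_pmf p) (\<lambda>k. 1 + real k)"
    unfolding Geom_plus_def by simp
  also have "\<dots> = 1 + measure_pmf.expectation (geometric_pmf p) real"
  proof -
    have i1: "integrable (geometric_pmf p) (\<lambda>_. 1::real)" by simp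
    show ?thesis using Bochner_Integration.integral_add[OF i1 i] by simp
  qed
  also have "\<dots> = 1 + (1 - p) / p" using expectation_geometric_pmf[of p] assms by simp
  also have "\<dots> = 1 / p" using assms by (simp add: field_simps)
  finally show ?thesis .
qed

lemma pmf_Geom_plus_tendsto:
  assumes th: "\<And>n. 0 < t n \<and> t n \<le> 1" "0 < t0" "t0 \<le> 1" and lim: "t \<longlonglongrightarrow> t0"
  shows "(\<lambda>n. pmf (Geom_plus (t n)) k) \<longlonglongrightarrow> pmf (Geom_plus t0) k"
proof -
  have "(\<lambda>n. pmf (Geom_plus (t n)) k) = (\<lambda>n. if k = 0 then 0 else t n * (1 - t n) ^ (k - 1))"
    using th by (simp add: pmf_Geom_plus)
  moreover have "pmf (Geom_plus t0) k = (if k = 0 then 0 else t0 * (1 - t0) ^ (k - 1))"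
    using th by (simp add: pmf_Geom_plus)
  moreover have "(\<lambda>n. if k = 0 then 0 else t n * (1 - t n) ^ (k - 1)) \<longlonglongrightarrow> (if k = 0 then 0 else t0 * (1 - t0) ^ (k - 1))"
    by (cases "k = 0") (auto intro!: tendsto_intros lim)
  ultimately show ?thesis by simp
qed



lemma theta_bounds:
  fixes c t :: real
  assumes "1 < c" "0 \<le> t"
  shows "0 < 1/c + (1 - 1/c) / (1 + t) \<and> 1/c + (1 - 1/c) / (1 + t) \<le> 1"
proof -
  have "0 < 1/c" using assms by simp
  moreover have "0 \<le> (1 - 1/c) / (1 + t)" using assms by simp
  ultimately have a: "0 < 1/c + (1 - 1/c) / (1 + t)" by (rule add_pos_nonneg)
  have "(1 - 1/c) / (1 + t) \<le> (1 - 1/c) / 1" using assms by (intro divide_left_mono) auto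
  then show ?thesis using a by simp
qed

lemma det_main:
  fixes A B :: "nat \<Rightarrow> 'a \<Rightarrow> real" and l :: nat and \<omega> :: 'a
  assumes good: "\<And>i. 1 \<le> i \<Longrightarrow> 0 < A i \<omega> \<and> 0 < B i \<omega> \<and> 1 \<le> A i \<omega> + B i \<omega>"
    and conv: "convergent (\<lambda>n. Rm1_env A B n \<omega>)"
  shows "(c_env A B l \<omega> > 1 \<longrightarrow>
         ((\<lambda>n. tv_dist
             (map_pmf (\<lambda>zs. zs ! n)
                (cond_pmf (Pq A B (n + l) \<omega>) {zs. zs ! n > 0 \<and> zs ! (n + l) = 0}))
             (Geom_plus (theta_env A B l \<omega>))) \<longlonglongrightarrow> 0)
       \<and> ((\<lambda>n. measure_pmf.expectation
               (cond_pmf (Pq A B (n + l) \<omega>) {zs. zs ! n > 0 \<and> zs ! (n + l) = 0})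
               (\<lambda>zs. real (zs ! n))) \<longlonglongrightarrow> 1 / theta_env A B l \<omega>))
    \<and> ((\<lambda>n. Pi_env A (n + l) \<omega> / Pi_env A l \<omega>
             * measure_pmf.prob (Pq A B (n + l) \<omega>) {zs. zs ! n > 0 \<and> zs ! (n + l) = 0})
        \<longlonglongrightarrow> (1 - 1 / c_env A B l \<omega>) / (1 + Rm1_tail A B l \<omega> / c_env A B l \<omega>)
              * (1 / (1 + Rm1_tail A B l \<omega>)))"
proof -
  have good': "\<And>i. 1 \<le> i \<Longrightarrow> 0 < A i \<omega> \<and> 0 \<le> B i \<omega> \<and> 1 \<le> A i \<omega> + B i \<omega>"
    using good by (simp add: less_imp_le)
  define c where "c = c_env A B l \<omega>"
  define T where "T = Rm1_tail A B l \<omega>"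
  define Tn where "Tn n = Pi_env A l \<omega> * (Rm1_env A B (n + l) \<omega> - Rm1_env A B l \<omega>)" for n
  define al where "al n = Pi_env A (n + l) \<omega> / Pi_env A l \<omega>" for n
  define S where "S n = {zs. zs ! n > 0 \<and> zs ! (n + l) = (0::nat)}" for n
  note fx = fixed_n[where A=A and B=B and \<omega>=\<omega>, OF good']
  have c1: "1 \<le> c" using fx(1)[where l=l] unfolding c_def .
  have alpos: "0 < al n" for n using fx(2)[where n=n and l=l] unfolding al_def .
  have Tnpos: "0 \<le> Tn n" for n using fx(3)[where n=n and l=l] unfolding Tn_def .
  have PS: "measure_pmf.prob (Pq A B (n + l) \<omega>) (S n) = 1 / (al n * (1 + Tn n)) - 1 / (al n * (c + Tn n))" for n
    using fx(4)[where n=n and l=l] unfolding al_def Tn_def c_def S_def .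
  have "(\<lambda>n. Rm1_env A B n \<omega>) \<longlonglongrightarrow> Rm1_inf A B \<omega>"
    using conv unfolding Rm1_inf_def by (simp add: convergent_LIMSEQ_iff)
  then have "(\<lambda>n. Rm1_env A B (n + l) \<omega>) \<longlonglongrightarrow> Rm1_inf A B \<omega>"
    by (rule LIMSEQ_ignore_initial_segment)
  then have TnT: "Tn \<longlonglongrightarrow> T"
    unfolding Tn_def T_def Rm1_tail_def by (intro tendsto_intros)
  have Tpos: "0 \<le> T"
    by (rule LIMSEQ_le_const[OF TnT]) (use Tnpos in auto)
  have third: "(\<lambda>n. al n * measure_pmf.prob (Pq A B (n + l) \<omega>) (S n))
       \<longlonglongrightarrow> (1 - 1 / c) / (1 + T / c) * (1 / (1 + T))"
  proof -
    have e: "al n * measure_pmf.prob (Pq A B (n + l) \<omega>) (S n) = 1 / (1 + Tn n) - 1 / (c + Tn n)" for n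
    proof -
      have "al n \<noteq> 0" using alpos[of n] by simp
      then show ?thesis unfolding PS by (simp add: right_diff_distrib)
    qed
    have "(\<lambda>n. 1 / (1 + Tn n) - 1 / (c + Tn n)) \<longlonglongrightarrow> 1 / (1 + T) - 1 / (c + T)"
      using Tpos c1 by (intro tendsto_intros TnT) auto
    then show ?thesis unfolding e alg3[OF Tpos c1] .
  qed
  have part1: "c > 1 \<Longrightarrow>
         ((\<lambda>n. tv_dist (map_pmf (\<lambda>zs. zs ! n) (cond_pmf (Pq A B (n + l) \<omega>) (S n)))
             (Geom_plus (theta_env A B l \<omega>))) \<longlonglongrightarrow> 0)
       \<and> ((\<lambda>n. measure_pmf.expectation (cond_pmf (Pq A B (n + l) \<omega>) (S n)) (\<lambda>zs. real (zs ! n)))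
             \<longlonglongrightarrow> 1 / theta_env A B l \<omega>)"
  proof -
    assume cgt: "c > 1"
    define th where "th n = 1/c + (1 - 1/c) / (1 + Tn n)" for n
    define th0 where "th0 = 1/c + (1 - 1/c) / (1 + T)"
    have th0eq: "theta_env A B l \<omega> = th0" unfolding theta_env_def th0_def c_def T_def by simp
    have law: "map_pmf (\<lambda>zs. zs ! n) (cond_pmf (Pq A B (n + l) \<omega>) (S n)) = Geom_plus (th n)" for n
      using fx(5)[where n=n and l=l] cgt unfolding th_def al_def Tn_def c_def S_def by simp
    have thb: "0 < th n \<and> th n \<le> 1" for n unfolding th_def by (rule theta_bounds[OF cgt Tnpos])
    have th0b: "0 < th0" "th0 \<le> 1" using theta_bounds[OF cgt Tpos] unfolding th0_def by auto
    have thlim: "th \<longlonglongrightarrow> th0"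
      unfolding th_def th0_def using Tpos by (intro tendsto_intros TnT) auto
    have tv: "(\<lambda>n. tv_dist (Geom_plus (th n)) (Geom_plus th0)) \<longlonglongrightarrow> 0"
      by (rule tv_conv, rule pmf_Geom_plus_tendsto[OF thb th0b thlim])
    have ex: "measure_pmf.expectation (cond_pmf (Pq A B (n + l) \<omega>) (S n)) (\<lambda>zs. real (zs ! n)) = 1 / th n" for n
    proof -
      have "measure_pmf.expectation (cond_pmf (Pq A B (n + l) \<omega>) (S n)) (\<lambda>zs. real (zs ! n))
          = measure_pmf.expectation (map_pmf (\<lambda>zs. zs ! n) (cond_pmf (Pq A B (n + l) \<omega>) (S n))) real"
        by simp
      also have "\<dots> = 1 / th n" unfolding law using thb[of n] by (simp add: expectation_Geom_plus)
      finally show ?thesis .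
    qed
    have exlim: "(\<lambda>n. 1 / th n) \<longlonglongrightarrow> 1 / th0"
      using th0b by (intro tendsto_intros thlim) auto
    show ?thesis unfolding law ex th0eq using tv exlim by simp
  qed
  show ?thesis
    using part1 third unfolding S_def al_def c_def T_def by simp
qed



lemma good_set_meas: "{x \<in> space (borel :: (real \<times> real) measure). 0 < fst x \<and> 0 < snd x \<and> 1 \<le> fst x + snd x} \<in> sets borel"
proof -
  have o1: "open {x :: real \<times> real. 0 < fst x}"
    by (rule open_Collect_less) (intro continuous_intros)+
  have o2: "open {x :: real \<times> real. 0 < snd x}"
    by (rule open_Collect_less) (intro continuous_intros)+
  have c3: "closed {x :: real \<times> real. 1 \<le> fst x + snd x}"
    by (rule closed_Collect_le) (intro continuous_intros)+
  have "{x :: real \<times> real. 0 < fst x} \<inter> {x. 0 < snd x} \<inter> {x. 1 \<le> fst x + snd x} \<in> sets borel"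
    using borel_open[OF o1] borel_open[OF o2] borel_closed[OF c3] by (intro sets.Int)
  moreover have "{x \<in> space (borel :: (real \<times> real) measure). 0 < fst x \<and> 0 < snd x \<and> 1 \<le> fst x + snd x}
      = {x :: real \<times> real. 0 < fst x} \<inter> {x. 0 < snd x} \<inter> {x. 1 \<le> fst x + snd x}" by auto
  ultimately show ?thesis by simp
qed

theorem theorem3p2:
  fixes M :: "'a measure" and A B :: "nat \<Rightarrow> 'a \<Rightarrow> real" and l :: nat
  assumes "prob_space M"
    and rv: "\<And>n. n \<ge> 1 \<Longrightarrow> (\<lambda>\<omega>. (A n \<omega>, B n \<omega>)) \<in> borel_measurable M"
    and indep: "prob_space.indep_vars M (\<lambda>_. borel) (\<lambda>n \<omega>. (A n \<omega>, B n \<omega>)) {1..}"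
    and ident: "\<And>n. n \<ge> 1 \<Longrightarrow>
        distr M borel (\<lambda>\<omega>. (A n \<omega>, B n \<omega>)) = distr M borel (\<lambda>\<omega>. (A 1 \<omega>, B 1 \<omega>))"
    and supp: "AE \<omega> in M. A 1 \<omega> > 0 \<and> B 1 \<omega> > 0 \<and> A 1 \<omega> + B 1 \<omega> \<ge> 1"
    and subcrit: "AE \<omega> in M. convergent (\<lambda>n. Rm1_env A B n \<omega>)
                    \<and> filterlim (\<lambda>n. R_env A B n \<omega>) at_top sequentially"
    and l: "l \<ge> 1"
  shows "AE \<omega> in M.
      (c_env A B l \<omega> > 1 \<longrightarrow>
         ((\<lambda>n. tv_dist
             (map_pmf (\<lambda>zs. zs ! n)
                (cond_pmf (Pq A B (n + l) \<omega>) {zs. zs ! n > 0 \<and> zs ! (n + l) = 0}))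
             (Geom_plus (theta_env A B l \<omega>))) \<longlonglongrightarrow> 0)
       \<and> ((\<lambda>n. measure_pmf.expectation
               (cond_pmf (Pq A B (n + l) \<omega>) {zs. zs ! n > 0 \<and> zs ! (n + l) = 0})
               (\<lambda>zs. real (zs ! n))) \<longlonglongrightarrow> 1 / theta_env A B l \<omega>))
    \<and> ((\<lambda>n. Pi_env A (n + l) \<omega> / Pi_env A l \<omega>
             * measure_pmf.prob (Pq A B (n + l) \<omega>) {zs. zs ! n > 0 \<and> zs ! (n + l) = 0})
        \<longlonglongrightarrow> (1 - 1 / c_env A B l \<omega>) / (1 + Rm1_tail A B l \<omega> / c_env A B l \<omega>)
              * (1 / (1 + Rm1_tail A B l \<omega>)))"
proof -
  define f where "f n \<omega> = (A n \<omega>, B n \<omega>)" for n \<omega>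
  define P where "P x = (0 < fst x \<and> 0 < snd x \<and> 1 \<le> fst x + snd x)" for x :: "real \<times> real"
  have Pset: "{x \<in> space borel. P x} \<in> sets borel" unfolding P_def by (rule good_set_meas)
  have each: "AE \<omega> in M. 1 \<le> i \<longrightarrow> 0 < A i \<omega> \<and> 0 < B i \<omega> \<and> 1 \<le> A i \<omega> + B i \<omega>" for i :: nat
  proof (cases "1 \<le> i")
    case False then show ?thesis by simp
  next
    case True
    have m1: "f 1 \<in> borel_measurable M" unfolding f_def using rv[of 1] by simp
    have mi: "f i \<in> borel_measurable M" unfolding f_def using rv[OF True] by simp
    have "AE \<omega> in M. P (f 1 \<omega>)" using supp unfolding P_def f_def by simp
    then have h1: "AE x in distr M borel (f 1). P x" by (subst AE_distr_iff[OF m1 Pset])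
    have eq: "distr M borel (f i) = distr M borel (f 1)" unfolding f_def by (rule ident[OF True])
    have "AE x in distr M borel (f i). P x" unfolding eq by (rule h1)
    then have "AE \<omega> in M. P (f i \<omega>)" by (subst (asm) AE_distr_iff[OF mi Pset])
    then show ?thesis unfolding P_def f_def by simp
  qed
  have "AE \<omega> in M. \<forall>i::nat. 1 \<le> i \<longrightarrow> 0 < A i \<omega> \<and> 0 < B i \<omega> \<and> 1 \<le> A i \<omega> + B i \<omega>"
    unfolding AE_all_countable using each by blast
  with subcrit show ?thesis
  proof (eventually_elim)
    case (elim \<omega>)
    then show ?case using det_main[of A \<omega> B l] by blast
  qed
qed


end
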